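(* For all $a,b\in\mathbb R$, each of the following systems has an isochronous center at the origin $O$ with zero Urabe function: (i) $\dot x=-y+axy+a^2x^2y+x^2-ax^3-a^2x^4$, $\dot y=x+3ay^2-2xy-ax^2+2a^2xy^2-4ax^2y+2x^3-2a^2x^3y+ax^4$; (ii) $\dot x=-y+axy+3a^2x^2y+x^2-ax^3-3a^2x^4$, $\dot y=x+4ay^2-2xy-\frac32ax^2+6a^2xy^2-6ax^2y+2x^3-6a^2x^3y+2ax^4$; (iii) with $K=a^2-\frac32ab+\frac12b^2$: $\dot x=-y+axy+Kx^2y+x^2-ax^3-Kx^4$, $\dot y=x+by^2-2xy+\frac{a-b}{2}x^2+2Kxy^2+2(a-b)x^2y+2x^3-2Kx^3y+(b-2a)x^4$.
   Context: For a real planar polynomial system $\dot x=-y+A(x,y)$, $\dot y=x+B(x,y)$, with $A,B$ polynomials having no terms of degree $<2$, the origin $O$ is an isochronous center if there is a punctured neighborhood of $O$ in which every orbit is a closed orbit surrounding $O$ and all these orbits have the same period. Zero Urabe function: write the system as $\dot x=p_0(x)+p_1(x)y$, $\dot y=q_0(x)+q_1(x)y+q_2(x)y^2$ ($p_0(0)=q_0(0)=0$, $p_1(0)\ne0$), where it holds that $-\frac{p_1'p_0}{p_1}+q_1+p_0'-\frac{2q_2p_0}{p_1}\equiv0$. Put $f=-\frac{q_2+p_1'}{p_1}$, $g=-\frac{q_2p_0^2}{p_1}+q_1p_0-p_1q_0$ (the change $z=p_0+p_1y$ gives $\dot x=z$, $\dot z=-g(x)-f(x)z^2$), $F(x)=\int_0^xf$,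 and $\xi$ near $0$ by $\frac12\xi(x)^2=\int_0^xg(s)e^{2F(s)}ds$, $x\xi(x)>0$ for $x\ne0$. The Urabe function of an isochronous center is the odd analytic $h$ with $\frac{\xi(x)}{1+h(\xi(x))}=g(x)e^{F(x)}$; "zero Urabe function" means $h\equiv0$, i.e. $\xi(x)=g(x)e^{F(x)}$ near $0$. *)

theory Defs
  imports "HOL-Analysis.Analysis" "HOL-Computational_Algebra.Polynomial"
begin

definition surrounds_origin :: "(real \<times> real) set \<Rightarrow> bool" where
  "surrounds_origin C \<longleftrightarrow> (0,0) \<notin> C \<and> bounded (connected_component_set (- C) (0,0))"

definition isochronous_center :: "(real \<times> real \<Rightarrow> real \<times> real) \<Rightarrow> bool" where
  "isochronous_center V \<longleftrightarrow>
     (\<exists>U T. open U \<and> (0,0) \<in> U \<and> T > 0 \<and>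
       (\<forall>p \<in> U - {(0,0)}. \<exists>\<phi> :: real \<Rightarrow> real \<times> real.
          \<phi> 0 = p \<and>
          (\<forall>t. (\<phi> has_vector_derivative V (\<phi> t)) (at t)) \<and>
          (\<forall>t. \<phi> (t + T) = \<phi> t) \<and>
          (\<forall>t. 0 < t \<and> t < T \<longrightarrow> \<phi> t \<noteq> p) \<and>
          surrounds_origin (\<phi> ` {0..T})))"

definition sint :: "(real \<Rightarrow> real) \<Rightarrow> real \<Rightarrow> real" where
  "sint h x = (if 0 \<le> x then integral {0..x} h else - integral {x..0} h)"

definition urabe_f :: "real poly \<Rightarrow> real poly \<Rightarrow> real \<Rightarrow> real" where
  "urabe_f p1 q2 x = - (poly q2 x + poly (pderiv p1) x) / poly p1 x"

definition urabe_g :: "real poly \<Rightarrow> real poly \<Rightarrow> real poly \<Rightarrow> real poly \<Rightarrow> real poly \<Rightarrow> real \<Rightarrow> real" where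
  "urabe_g p0 p1 q0 q1 q2 x =
     - poly q2 x * (poly p0 x)^2 / poly p1 x + poly q1 x * poly p0 x - poly p1 x * poly q0 x"

definition urabe_identity :: "real poly \<Rightarrow> real poly \<Rightarrow> real poly \<Rightarrow> real poly \<Rightarrow> real \<Rightarrow> real" where
  "urabe_identity p0 p1 q1 q2 x =
     - poly (pderiv p1) x * poly p0 x / poly p1 x + poly q1 x + poly (pderiv p0) x
     - 2 * poly q2 x * poly p0 x / poly p1 x"

text \<open>Zero Urabe function: near 0, the compatibility identity holds and the function
  xi defined by (1/2) xi(x)^2 = int_0^x g e^(2F), x xi(x) > 0 (x \<noteq> 0), equals g e^F;
  i.e. g e^F itself satisfies the defining properties of xi.\<close>
definition urabe_zero :: "real poly \<Rightarrow> real poly \<Rightarrow> real poly \<Rightarrow> real poly \<Rightarrow> real poly \<Rightarrow> bool" where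
  "urabe_zero p0 p1 q0 q1 q2 \<longleftrightarrow>
     (\<exists>\<delta>>0. \<forall>x. \<bar>x\<bar> < \<delta> \<longrightarrow>
        (let F = sint (urabe_f p1 q2);
             g = urabe_g p0 p1 q0 q1 q2;
             G = g x * exp (F x)
         in urabe_identity p0 p1 q1 q2 x = 0 \<and>
            G\<^sup>2 / 2 = sint (\<lambda>s. g s * exp (2 * F s)) x \<and>
            (x \<noteq> 0 \<longrightarrow> x * G > 0)))"

definition zero_urabe_system :: "(real \<times> real \<Rightarrow> real \<times> real) \<Rightarrow> bool" where
  "zero_urabe_system V \<longleftrightarrow>
     (\<exists>p0 p1 q0 q1 q2.
        V = (\<lambda>(x, y). (poly p0 x + poly p1 x * y,
                        poly q0 x + poly q1 x * y + poly q2 x * y^2)) \<and>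
        poly p0 0 = 0 \<and> poly q0 0 = 0 \<and> poly p1 0 \<noteq> 0 \<and>
        urabe_zero p0 p1 q0 q1 q2)"

end

theory Submission
  imports Defs
begin


lemma sint_eq:
  assumes cont: "continuous_on {-c..c} h" and x: "-c \<le> x" "x \<le> c"
  shows "sint h x = integral {-c..x} h - integral {-c..0} h"
proof -
  have int: "h integrable_on {-c..c}" using cont integrable_continuous_interval by blast
  show ?thesis
  proof (cases "0 \<le> x")
    case True
    have i2: "h integrable_on {-c..x}" using integrable_subinterval_real[OF int] x by auto
    have "integral {-c..0} h + integral {0..x} h = integral {-c..x} h"
      using Henstock_Kurzweil_Integration.integral_combine[OF _ True i2] x True by auto
    then show ?thesis using True by (simp add: sint_def)
  next
    case False
    have i2: "h integrable_on {-c..0}" using integrable_subinterval_real[OF int] x False by auto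
    have "integral {-c..x} h + integral {x..0} h = integral {-c..0} h"
      using Henstock_Kurzweil_Integration.integral_combine[OF _ _ i2] x False by auto
    then show ?thesis using False by (simp add: sint_def)
  qed
qed

lemma sint_deriv:
  assumes cont: "continuous_on {-c..c} h" and x: "\<bar>x\<bar> < c"
  shows "(sint h has_real_derivative h x) (at x)"
proof -
  have "((\<lambda>x. integral {-c..x} h) has_real_derivative h x) (at x within {-c..c})"
    using integral_has_real_derivative[OF cont, of x] x by (auto simp: abs_less_iff)
  then have "((\<lambda>x. integral {-c..x} h - integral {-c..0} h) has_real_derivative h x - 0) (at x within {-c..c})"
    by (intro DERIV_diff) auto
  then have d: "((\<lambda>x. integral {-c..x} h - integral {-c..0} h) has_real_derivative h x) (at x)"
    using x by (subst (asm) at_within_interior) (auto simp: interior_atLeastAtMost_real)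
  show ?thesis
    apply (rule has_field_derivative_transform_within_open[OF d, of "{-c<..<c}"])
    using x sint_eq[OF cont] by auto
qed

lemma sint_zero: "sint h 0 = 0" by (simp add: sint_def)



lemma iso_abstract:
  fixes PA PB DPA DPB QA QB QC f g xi E :: "real \<Rightarrow> real" and d \<delta> c :: real
  assumes dpos: "0 < d" and d\<delta>: "d < \<delta>" and cpos: "0 < c"
    and dxi: "\<And>x. \<bar>x\<bar> < \<delta> \<Longrightarrow> (xi has_real_derivative E x) (at x)"
    and dE: "\<And>x. \<bar>x\<bar> < \<delta> \<Longrightarrow> (E has_real_derivative E x * f x) (at x)"
    and dP0: "\<And>x. (PA has_real_derivative DPA x) (at x)"
    and dP1: "\<And>x. (PB has_real_derivative DPB x) (at x)"
    and Epos: "\<And>x. \<bar>x\<bar> < \<delta> \<Longrightarrow> E x > 0"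
    and xig: "\<And>x. \<bar>x\<bar> < \<delta> \<Longrightarrow> xi x = g x * E x"
    and P1c: "\<And>x. \<bar>x\<bar> \<le> d \<Longrightarrow> c \<le> \<bar>PB x\<bar>"
    and P0b: "\<And>x. \<bar>x\<bar> \<le> d \<Longrightarrow> \<bar>PA x\<bar> \<le> 1"
    and Eb: "\<And>x. \<bar>x\<bar> \<le> d \<Longrightarrow> 1/2 \<le> E x"
    and xi0: "xi 0 = 0" and P00: "PA 0 = 0"
    and hY: "\<And>x z. \<bar>x\<bar> < \<delta> \<Longrightarrow> ((- g x - f x * z^2) - DPA x * z) * PB x - (z - PA x) * (DPB x * z)
                 = (PB x)^2 * (QA x + QB x * ((z - PA x) / PB x) + QC x * ((z - PA x) / PB x)^2)"
  shows "isochronous_center (\<lambda>(x, y). (PA x + PB x * y, QA x + QB x * y + QC x * y^2))"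
proof -
  have cxi: "\<And>x. \<bar>x\<bar> < \<delta> \<Longrightarrow> isCont xi x" using dxi DERIV_isCont by blast
  have cE: "\<And>x. \<bar>x\<bar> < \<delta> \<Longrightarrow> isCont E x" using dE DERIV_isCont by blast
  have cP0: "\<And>x. isCont PA x" using dP0 DERIV_isCont by blast
  have cP1: "\<And>x. isCont PB x" using dP1 DERIV_isCont by blast
  have mono: "xi u < xi v" if "\<bar>u\<bar> < \<delta>" "\<bar>v\<bar> < \<delta>" "u < v" for u v
  proof (rule DERIV_pos_imp_increasing[OF that(3)])
    fix x assume "u \<le> x" "x \<le> v"
    then have "\<bar>x\<bar> < \<delta>" using that by auto
    then show "\<exists>y. DERIV xi x :> y \<and> 0 < y" using dxi Epos by blast
  qed
  have monole: "xi u \<le> xi v \<longleftrightarrow> u \<le> v" if "\<bar>u\<bar> < \<delta>" "\<bar>v\<bar> < \<delta>" for u v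
    using mono[OF that] mono[OF that(2,1)] by (cases u v rule: linorder_cases) auto
  have xieq: "xi u = xi v \<longleftrightarrow> u = v" if "\<bar>u\<bar> < \<delta>" "\<bar>v\<bar> < \<delta>" for u v
    using monole[OF that] monole[OF that(2,1)] by (auto simp: order.eq_iff)
  define m where "m = min (xi d) (- xi (-d))"
  have xid: "0 < xi d" using mono[of 0 d] xi0 dpos d\<delta> by auto
  have ximd: "xi (-d) < 0" using mono[of "-d" 0] xi0 dpos d\<delta> by auto
  have mpos: "0 < m" and mxid: "m \<le> xi d" and mxmd: "xi (-d) \<le> -m"
    using xid ximd by (auto simp: m_def)
  have contI: "continuous_on {-d..d} xi"
    by (intro continuous_at_imp_continuous_on ballI cxi) (use d\<delta> in auto)
  define xinv where "xinv = inv_into {-d..d} xi"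
  have inj: "inj_on xi {-d..d}"
    by (rule inj_onI) (use xieq d\<delta> in force)
  have xinv_xi: "xinv (xi x) = x" if "\<bar>x\<bar> \<le> d" for x
    unfolding xinv_def using that inj by (intro inv_into_f_f) auto
  have xi_xinv: "xi (xinv w) = w \<and> \<bar>xinv w\<bar> < d" if w: "\<bar>w\<bar> < m" for w
  proof -
    have "xi (-d) \<le> w" "w \<le> xi d" using w mxid mxmd by (auto simp: abs_less_iff)
    then obtain x where x: "-d \<le> x" "x \<le> d" "xi x = w"
      using IVT'[of xi "-d" w d] contI dpos by auto
    have "x \<noteq> d" "x \<noteq> -d" using x w mxid mxmd by auto
    then show ?thesis using x xinv_xi[of x] by auto
  qed
  have dxinv: "(xinv has_real_derivative inverse (E (xinv w))) (at w)" if w: "\<bar>w\<bar> < m" for w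
  proof (rule DERIV_inverse_function[where a="-m" and b=m])
    have xw: "\<bar>xinv w\<bar> < d" using xi_xinv[OF w] by auto
    show "DERIV xi (xinv w) :> E (xinv w)" using dxi xw d\<delta> by auto
    show "E (xinv w) \<noteq> 0" using Epos[of "xinv w"] xw d\<delta> by linarith
    show "-m < w" "w < m" using w by auto
    show "xi (xinv y) = y" if "-m < y" "y < m" for y using xi_xinv that by auto
    have "isCont xinv (xi (xinv w))"
      by (rule isCont_inverse_function2[where a="-d" and b=d]) (use xw xinv_xi cxi d\<delta> in auto)
    then show "isCont xinv w" using xi_xinv[OF w] by simp
  qed
  define N where "N = (\<lambda>p::real\<times>real. (xi (fst p))^2 + ((PA (fst p) + PB (fst p) * snd p) * E (fst p))^2)"
  define S where "S = {p::real\<times>real. \<bar>fst p\<bar> < d}"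
  define U where "U = N -` {..<m^2} \<inter> S"
  have openS: "open S" unfolding S_def by (intro open_Collect_less continuous_intros)
  have contN: "continuous_on S N"
  proof (intro continuous_at_imp_continuous_on ballI)
    fix p assume "p \<in> S"
    then have p: "\<bar>fst p\<bar> < \<delta>" using d\<delta> by (auto simp: S_def)
    have c1: "isCont (\<lambda>p. xi (fst p)) p" by (rule isCont_o2[where f=fst and a=p]) (auto intro: continuous_intros cxi[OF p])
    have c2: "isCont (\<lambda>p. E (fst p)) p" by (rule isCont_o2[where f=fst and a=p]) (auto intro: continuous_intros cE[OF p])
    have c3: "isCont (\<lambda>p. PA (fst p)) p" by (rule isCont_o2[where f=fst and a=p]) (auto intro: continuous_intros cP0)
    have c4: "isCont (\<lambda>p. PB (fst p)) p" by (rule isCont_o2[where f=fst and a=p]) (auto intro: continuous_intros cP1)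
    show "isCont N p" unfolding N_def
      by (intro continuous_intros c1 c2 c3 c4)
  qed
  have openU: "open U" using contN openS unfolding U_def
    by (simp add: continuous_on_open_vimage)
  have U0: "(0,0) \<in> U" using mpos dpos by (simp add: U_def N_def S_def xi0 P00)

  show ?thesis unfolding isochronous_center_def
  proof (intro exI[of _ U] exI[of _ "2*pi"] conjI ballI openU U0)
    show "0 < 2*pi" by simp
    fix p assume pU: "p \<in> U - {(0,0)}"
    obtain x0 y0 where p: "p = (x0,y0)" by (cases p)
    have x0: "\<bar>x0\<bar> < d" and N0: "N (x0,y0) < m^2" using pU p by (auto simp: U_def S_def)
    define \<xi>0 where "\<xi>0 = xi x0"
    define \<eta>0 where "\<eta>0 = (PA x0 + PB x0 * y0) * E x0"
    define r2 where "r2 = \<xi>0^2 + \<eta>0^2"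
    have r2m: "r2 < m^2" using N0 by (simp add: N_def \<xi>0_def \<eta>0_def r2_def)
    have P10: "PB 0 \<noteq> 0" using P1c[of 0] cpos dpos by auto
    have rpos: "r2 > 0"
    proof -
      have "\<xi>0 \<noteq> 0 \<or> \<eta>0 \<noteq> 0"
      proof (rule ccontr)
        assume h: "\<not> (\<xi>0 \<noteq> 0 \<or> \<eta>0 \<noteq> 0)"
        then have "xi x0 = xi 0" using xi0 \<xi>0_def by simp
        then have x00: "x0 = 0" using xieq[of x0 0] x0 d\<delta> dpos by auto
        have "E x0 > 0" using Epos[of x0] x0 d\<delta> by linarith
        then have "PB x0 * y0 = 0" using h \<eta>0_def P00 x00 by auto
        then have "p = (0,0)" using p x00 P10 by auto
        then show False using pU by auto
      qed
      then show ?thesis by (simp add: r2_def sum_power2_gt_zero_iff)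
    qed
    define Xi where "Xi = (\<lambda>t. \<xi>0 * cos t + \<eta>0 * sin t)"
    define H where "H = (\<lambda>t. - \<xi>0 * sin t + \<eta>0 * cos t)"
    have circ: "(Xi t)^2 + (H t)^2 = r2" for t
    proof -
      have sc: "sin t * sin t = 1 - cos t * cos t" using sin_cos_squared_add[of t] by (simp add: power2_eq_square)
      show ?thesis by (simp add: Xi_def H_def r2_def power2_eq_square algebra_simps sc)
    qed
    have Xim: "\<bar>Xi t\<bar> < m" for t
    proof -
      have "(Xi t)^2 < m^2" using circ[of t] r2m zero_le_power2[of "H t"] by linarith
      then have "\<bar>Xi t\<bar>^2 < m^2" by simp
      then show ?thesis using power2_less_imp_less[of "\<bar>Xi t\<bar>" m] mpos by simp
    qed
    define X where "X = (\<lambda>t. xinv (Xi t))"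
    define Z where "Z = (\<lambda>t. H t / E (X t))"
    define Y where "Y = (\<lambda>t. (Z t - PA (X t)) / PB (X t))"
    define \<phi> where "\<phi> = (\<lambda>t. (X t, Y t))"
    have Xd: "\<bar>X t\<bar> < d" and xiX: "xi (X t) = Xi t" for t using xi_xinv[OF Xim] by (auto simp: X_def)
    have Xdel: "\<bar>X t\<bar> < \<delta>" for t using Xd[of t] d\<delta> by linarith
    have EX: "E (X t) > 0" for t using Epos[OF Xdel] .
    have P1X: "PB (X t) \<noteq> 0" for t using P1c[of "X t"] Xd[of t] cpos by force
    have ZY: "PA (X t) + PB (X t) * Y t = Z t" for t using P1X[of t] by (simp add: Y_def field_simps)
    have HZ: "H t = Z t * E (X t)" for t using EX[of t] by (simp add: Z_def)
    have dXi: "(Xi has_real_derivative H t) (at t)" for t unfolding Xi_def H_def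
      by (auto intro!: derivative_eq_intros)
    have dH: "(H has_real_derivative - Xi t) (at t)" for t unfolding Xi_def H_def
      by (auto intro!: derivative_eq_intros)
    have dX: "(X has_real_derivative Z t) (at t)" for t
    proof -
      have "((\<lambda>t. xinv (Xi t)) has_real_derivative inverse (E (xinv (Xi t))) * H t) (at t)"
        by (rule DERIV_chain2[OF dxinv[OF Xim] dXi])
      then show ?thesis by (simp add: X_def Z_def field_simps)
    qed
    have dEX: "((\<lambda>t. E (X t)) has_real_derivative E (X t) * f (X t) * Z t) (at t)" for t
      by (rule DERIV_chain2[OF dE[OF Xdel] dX])
    have dZ: "(Z has_real_derivative - g (X t) - f (X t) * (Z t)^2) (at t)" for t
    proof -
      have "((\<lambda>t. H t / E (X t)) has_real_derivative
          ((- Xi t) * E (X t) - H t * (E (X t) * f (X t) * Z t)) / (E (X t) * E (X t))) (at t)"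
        by (rule DERIV_divide[OF dH dEX]) (use EX[of t] in force)
      moreover have "((- Xi t) * E (X t) - H t * (E (X t) * f (X t) * Z t)) / (E (X t) * E (X t))
           = - g (X t) - f (X t) * (Z t)^2"
        using EX[of t] xiX[of t] xig[OF Xdel[of t]] HZ[of t]
        by (simp add: field_simps power2_eq_square)
      ultimately show ?thesis by (simp only: Z_def[symmetric])
    qed
    have dY: "(Y has_real_derivative QA (X t) + QB (X t) * Y t + QC (X t) * (Y t)^2) (at t)" for t
    proof -
      have "((\<lambda>t. (Z t - PA (X t)) / PB (X t)) has_real_derivative
          ((- g (X t) - f (X t) * (Z t)^2 - DPA (X t) * Z t) * PB (X t) - (Z t - PA (X t)) * (DPB (X t) * Z t))
             / (PB (X t) * PB (X t))) (at t)"
        by (intro DERIV_divide DERIV_diff dZ DERIV_chain2[OF dP0 dX] DERIV_chain2[OF dP1 dX] P1X)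
      moreover have "((- g (X t) - f (X t) * (Z t)^2 - DPA (X t) * Z t) * PB (X t) - (Z t - PA (X t)) * (DPB (X t) * Z t))
             / (PB (X t) * PB (X t)) = QA (X t) + QB (X t) * Y t + QC (X t) * (Y t)^2"
        using hY[OF Xdel[of t], of "Z t"] P1X[of t] by (simp add: Y_def power2_eq_square)
      ultimately show ?thesis by (simp only: Y_def[symmetric])
    qed
    show "\<exists>\<phi>. \<phi> 0 = p \<and>
          (\<forall>t. (\<phi> has_vector_derivative (\<lambda>(x, y). (PA x + PB x * y, QA x + QB x * y + QC x * y^2)) (\<phi> t)) (at t)) \<and>
          (\<forall>t. \<phi> (t + 2*pi) = \<phi> t) \<and>
          (\<forall>t. 0 < t \<and> t < 2*pi \<longrightarrow> \<phi> t \<noteq> p) \<and>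
          surrounds_origin (\<phi> ` {0..2*pi})"
    proof (intro exI[of _ \<phi>] conjI allI impI)
      have X0: "X 0 = x0" using xinv_xi[of x0] x0 by (simp add: X_def Xi_def \<xi>0_def)
      have "E x0 > 0" using Epos[of x0] x0 d\<delta> by linarith
      then have Z0: "Z 0 = PA x0 + PB x0 * y0" by (simp add: Z_def X0 H_def \<eta>0_def)
      have "PB x0 \<noteq> 0" using P1X[of 0] X0 by simp
      then show "\<phi> 0 = p" using Z0 X0 by (simp add: \<phi>_def Y_def p)
    next
      fix t
      show "(\<phi> has_vector_derivative (\<lambda>(x, y). (PA x + PB x * y, QA x + QB x * y + QC x * y^2)) (\<phi> t)) (at t)"
        unfolding \<phi>_def using ZY[of t]
        by (auto intro!: has_vector_derivative_Pair dX[THEN has_real_derivative_iff_has_vector_derivative[THEN iffD1]]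
                 dY[THEN has_real_derivative_iff_has_vector_derivative[THEN iffD1]])
    next
      fix t
      show "\<phi> (t + 2*pi) = \<phi> t" by (simp add: \<phi>_def Y_def Z_def X_def Xi_def H_def)
    next
      fix t assume t: "0 < t \<and> t < 2*pi"
      show "\<phi> t \<noteq> p"
      proof
        assume "\<phi> t = p"
        then have Xt: "X t = x0" and Yt: "Y t = y0" by (auto simp: \<phi>_def p)
        have e1: "Xi t = \<xi>0" using xiX[of t] Xt \<xi>0_def by simp
        have e2: "H t = \<eta>0" using HZ[of t] ZY[of t] Xt Yt \<eta>0_def by simp
        have "\<xi>0 * Xi t + \<eta>0 * H t = r2" using e1 e2 by (simp add: r2_def power2_eq_square)
        then have "cos t * r2 = r2" by (simp add: Xi_def H_def r2_def power2_eq_square algebra_simps)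
        then have "cos t = 1" using rpos by simp
        then obtain n :: int where n: "t = real_of_int n * 2 * pi" using cos_one_2pi_int by blast
        have "0 < real_of_int n * (2 * pi)" "real_of_int n * (2*pi) < 1 * (2*pi)" using t n by (auto simp: field_simps)
        then have "0 < real_of_int n" "real_of_int n < 1"
          using zero_less_mult_pos2[of "real_of_int n" "2*pi"] mult_less_cancel_right_pos[of "2*pi"] by auto
        then have "0 < n" "n < 1" by simp_all
        then show False by linarith
      qed
    next
      let ?C = "\<phi> ` {0..2*pi}"
      have notC: "(0,0) \<notin> ?C"
      proof
        assume "(0,0) \<in> ?C"
        then obtain t where X0: "X t = 0" and Y0: "Y t = 0" by (auto simp: \<phi>_def)
        then have "Xi t = 0" using xiX[of t] xi0 by simp
        moreover have "H t = 0" using HZ[of t] ZY[of t] X0 Y0 P00 by simp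
        ultimately show False using circ[of t] rpos by simp
      qed
      define cl where "cl = (\<lambda>x::real. max (-d) (min d x))"
      define h where "h = (\<lambda>q::real\<times>real. (xi (cl (fst q)))^2 + ((PA (cl (fst q)) + PB (cl (fst q)) * snd q) * E (cl (fst q)))^2)"
      have clI: "cl x \<in> {-d..d}" for x using dpos by (auto simp: cl_def)
      have ccl: "continuous_on UNIV (\<lambda>q::real\<times>real. cl (fst q))" unfolding cl_def by (intro continuous_intros)
      have cc: "continuous_on UNIV (\<lambda>q::real\<times>real. G (cl (fst q)))" if "\<And>x. \<bar>x\<bar> \<le> d \<Longrightarrow> isCont G x" for G
        by (rule continuous_on_compose2[OF _ ccl, of "{-d..d}"])
           (use clI that in \<open>auto intro!: continuous_at_imp_continuous_on\<close>)
      have hcont: "continuous_on UNIV h" unfolding h_def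
        by (intro continuous_intros cc) (use cxi cE cP0 cP1 d\<delta> in auto)
      have hcl: "m^2 \<le> (xi (cl x))^2" if "d \<le> \<bar>x\<bar>" for x
      proof (cases "0 \<le> x")
        case True
        then have "cl x = d" using that dpos by (auto simp: cl_def)
        then show ?thesis using mxid mpos by (simp add: power_mono)
      next
        case False
        then have "cl x = -d" using that dpos by (auto simp: cl_def)
        then have "m \<le> \<bar>xi (cl x)\<bar>" using mxmd ximd by auto
        then show ?thesis using mpos power_mono[of m "\<bar>xi (cl x)\<bar>" 2] by simp
      qed
      have hin: "\<bar>fst q\<bar> < d \<and> cl (fst q) = fst q" if "h q < m^2" for q
      proof -
        have "\<not> d \<le> \<bar>fst q\<bar>"
        proof
          assume "d \<le> \<bar>fst q\<bar>"
          then have "m^2 \<le> h q" using hcl[of "fst q"] unfolding h_def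
            by (smt (verit) zero_le_power2)
          then show False using that by simp
        qed
        then show ?thesis by (auto simp: cl_def)
      qed
      have hC: "q \<in> ?C" if hq: "h q = r2" for q
      proof -
        obtain x y where q: "q = (x,y)" by (cases q)
        have "\<bar>x\<bar> < d" "cl x = x" using hin[of q] hq r2m q by auto
        define \<xi> where "\<xi> = xi x"
        define \<eta> where "\<eta> = (PA x + PB x * y) * E x"
        have circq: "\<xi>^2 + \<eta>^2 = r2" using hq q \<open>cl x = x\<close> by (simp add: h_def \<xi>_def \<eta>_def)
        define r where "r = sqrt r2"
        have r: "r > 0" "r^2 = r2" using rpos by (auto simp: r_def)
        have "(\<xi>0/r)^2 + (\<eta>0/r)^2 = (\<xi>0^2 + \<eta>0^2) / r^2" by (simp add: power_divide add_divide_distrib)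
        also have "\<dots> = 1" using r rpos unfolding r2_def by (metis divide_self less_irrefl)
        finally have "(\<xi>0/r)^2 + (\<eta>0/r)^2 = 1" .
        then obtain \<alpha> where \<alpha>: "\<xi>0/r = cos \<alpha>" "\<eta>0/r = sin \<alpha>" "0 \<le> \<alpha>" "\<alpha> < 2*pi"
          using sincos_total_2pi by metis
        have "(\<xi>/r)^2 + (\<eta>/r)^2 = (\<xi>^2 + \<eta>^2) / r^2" by (simp add: power_divide add_divide_distrib)
        also have "\<dots> = 1" using r rpos circq by (metis divide_self less_irrefl)
        finally have "(\<xi>/r)^2 + (\<eta>/r)^2 = 1" .
        then obtain \<beta> where \<beta>: "\<xi>/r = cos \<beta>" "\<eta>/r = sin \<beta>" "0 \<le> \<beta>" "\<beta> < 2*pi"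
          using sincos_total_2pi by metis
        define t where "t = (if \<beta> \<le> \<alpha> then \<alpha> - \<beta> else \<alpha> - \<beta> + 2*pi)"
        have t: "t \<in> {0..2*pi}" using \<alpha> \<beta> by (auto simp: t_def)
        have cs: "cos (\<alpha> - t) = cos \<beta> \<and> sin (\<alpha> - t) = sin \<beta>"
        proof (cases "\<beta> \<le> \<alpha>")
          case True then show ?thesis by (simp add: t_def)
        next
          case False
          then have "\<alpha> - t = \<beta> - 2*pi" by (simp add: t_def)
          then show ?thesis by (simp add: cos_diff sin_diff)
        qed
        have x0r: "\<xi>0 = r * cos \<alpha>" "\<eta>0 = r * sin \<alpha>" using \<alpha> r by (auto simp: field_simps)
        have xr: "\<xi> = r * cos \<beta>" "\<eta> = r * sin \<beta>" using \<beta> r by (auto simp: field_simps)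
        have Xit: "Xi t = \<xi>"
        proof -
          have "Xi t = r * cos (\<alpha> - t)" by (simp add: Xi_def x0r cos_diff algebra_simps)
          then show ?thesis using cs xr by simp
        qed
        have Ht: "H t = \<eta>"
        proof -
          have "H t = r * sin (\<alpha> - t)" by (simp add: H_def x0r sin_diff algebra_simps)
          then show ?thesis using cs xr by simp
        qed
        have Xt: "X t = x" using xinv_xi[of x] \<open>\<bar>x\<bar> < d\<close> Xit by (simp add: X_def \<xi>_def)
        have "E x > 0" using Epos[of x] \<open>\<bar>x\<bar> < d\<close> d\<delta> by linarith
        then have Zt: "Z t = PA x + PB x * y" using Ht Xt by (simp add: Z_def \<eta>_def)
        have "PB x \<noteq> 0" using P1X[of t] Xt by simp
        then have "\<phi> t = q" using Xt Zt by (simp add: \<phi>_def Y_def q)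
        then show ?thesis using t by blast
      qed
      have hbd: "bounded {q. h q < r2}"
      proof (rule bounded_subset[OF bounded_Times[OF bounded_cball bounded_cball]])
        show "{q. h q < r2} \<subseteq> cball 0 d \<times> cball 0 ((2*m+1)/c)"
        proof
          fix q assume "q \<in> {q. h q < r2}"
          then have hq: "h q < r2" by simp
          obtain x y where q: "q = (x,y)" by (cases q)
          have xd: "\<bar>x\<bar> < d" "cl x = x" using hin[of q] hq r2m q by auto
          have "(xi x)^2 + ((PA x + PB x * y) * E x)^2 < r2" using hq q xd
            by (simp add: h_def)
          then have "((PA x + PB x * y) * E x)^2 < m^2" using r2m zero_le_power2[of "xi x"] by linarith
          then have "\<bar>(PA x + PB x * y) * E x\<bar> < m" using power2_less_imp_less[of "\<bar>(PA x + PB x * y) * E x\<bar>" m] mpos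
            by simp
          moreover have "1/2 \<le> E x" using Eb xd by auto
          ultimately have "\<bar>PA x + PB x * y\<bar> * (1/2) < m"
          proof -
            assume a1: "\<bar>(PA x + PB x * y) * E x\<bar> < m" and a2: "1/2 \<le> E x"
            have "\<bar>PA x + PB x * y\<bar> * (1/2) \<le> \<bar>PA x + PB x * y\<bar> * E x"
              by (rule mult_left_mono[OF a2 abs_ge_zero])
            also have "\<dots> = \<bar>(PA x + PB x * y) * E x\<bar>" using a2 by (simp add: abs_mult)
            finally show ?thesis using a1 by linarith
          qed
          then have "\<bar>PB x * y\<bar> < 2*m + 1" using P0b[of x] xd by (auto simp: abs_le_iff abs_less_iff)
          moreover have "c * \<bar>y\<bar> \<le> \<bar>PB x * y\<bar>" using P1c[of x] xd by (simp add: abs_mult mult_right_mono)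
          ultimately have "\<bar>y\<bar> \<le> (2*m+1)/c" using cpos by (simp add: field_simps)
          then show "q \<in> cball 0 d \<times> cball 0 ((2*m+1)/c)" using xd q by auto
        qed
      qed
      show "surrounds_origin ?C" unfolding surrounds_origin_def
      proof (intro conjI notC)
        let ?K = "connected_component_set (- ?C) (0,0)"
        show "bounded ?K"
        proof (rule bounded_subset[OF hbd], rule subsetI)
          fix q assume qK: "q \<in> ?K"
          show "q \<in> {q. h q < r2}"
          proof (rule ccontr)
            assume "q \<notin> {q. h q < r2}"
            then have hq: "r2 \<le> h q" by simp
            have conn: "connected (h ` ?K)"
              by (rule connected_continuous_image[OF continuous_on_subset[OF hcont] connected_connected_component]) auto
            have "(0,0) \<in> ?K" using notC by auto
            moreover have "h (0,0) = 0" using dpos by (simp add: h_def cl_def xi0 P00)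
            ultimately have "0 \<in> h ` ?K" by force
            moreover have "h q \<in> h ` ?K" using qK by blast
            ultimately have "{0..h q} \<subseteq> h ` ?K" by (rule connected_contains_Icc[OF conn])
            then have "r2 \<in> h ` ?K" using hq rpos by auto
            then obtain q' where q': "q' \<in> ?K" "h q' = r2" by auto
            then have "q' \<in> ?C" using hC by blast
            moreover have "q' \<in> - ?C" using q' connected_component_subset by blast
            ultimately show False by blast
          qed
        qed
      qed
    qed
  qed
qed


lemma isCont_nbhd:
  fixes h :: "real \<Rightarrow> real"
  assumes "isCont h 0" "e > 0"
  shows "\<exists>s>0. \<forall>x. \<bar>x\<bar> < s \<longrightarrow> \<bar>h x - h 0\<bar> < e"
proof -
  obtain s where s: "s > 0" "\<forall>x. x \<noteq> 0 \<and> norm (x - 0) < s \<longrightarrow> norm (h x - h 0) < e"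
    using assms unfolding isCont_def LIM_eq by blast
  show ?thesis
  proof (intro exI[of _ s] conjI allI impI)
    fix x :: real assume "\<bar>x\<bar> < s"
    then show "\<bar>h x - h 0\<bar> < e" using s assms(2) by (cases "x = 0") auto
  qed (use s in auto)
qed

lemma alg:
  fixes p0 p1 p0' p1' q0 q1 q2 z :: real
  assumes "p1 \<noteq> 0" "- p1' * p0 / p1 + q1 + p0' - 2 * q2 * p0 / p1 = 0"
  shows "((- (- q2 * p0^2 / p1 + q1 * p0 - p1 * q0) - (- (q2 + p1') / p1) * z^2) - p0' * z) * p1 - (z - p0) * (p1' * z)
     = p1^2 * (q0 + q1 * ((z - p0)/p1) + q2 * ((z - p0)/p1)^2)"
proof -
  have q1: "q1 = p1' * p0 / p1 - p0' + 2 * q2 * p0 / p1" using assms(2) by linarith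
  show ?thesis unfolding q1 using assms(1) by (simp add: field_simps power2_eq_square)
qed

lemma main_lemma:
  fixes p0 p1 q0 q1 q2 :: "real poly"
  assumes h00: "poly p0 0 = 0" and hq0: "poly q0 0 = 0" and hp1: "poly p1 0 \<noteq> 0"
    and hid: "\<And>x. poly p1 x \<noteq> 0 \<Longrightarrow> urabe_identity p0 p1 q1 q2 x = 0"
    and hg: "\<And>x. poly p1 x \<noteq> 0 \<Longrightarrow> (urabe_g p0 p1 q0 q1 q2 has_real_derivative
                  1 - urabe_g p0 p1 q0 q1 q2 x * urabe_f p1 q2 x) (at x)"
  shows "isochronous_center (\<lambda>(x,y). (poly p0 x + poly p1 x * y, poly q0 x + poly q1 x * y + poly q2 x * y^2))
         \<and> urabe_zero p0 p1 q0 q1 q2"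
proof -
  define c where "c = \<bar>poly p1 0\<bar> / 2"
  have cpos: "c > 0" using hp1 by (simp add: c_def)
  obtain s1 where s1: "s1 > 0" "\<forall>x. \<bar>x\<bar> < s1 \<longrightarrow> \<bar>poly p1 x - poly p1 0\<bar> < c"
    using isCont_nbhd[of "poly p1" c] cpos by auto
  define \<delta> where "\<delta> = s1 / 2"
  have \<delta>pos: "\<delta> > 0" using s1 by (simp add: \<delta>_def)
  have p1c: "c \<le> \<bar>poly p1 x\<bar>" if "\<bar>x\<bar> \<le> \<delta>" for x
  proof -
    have "\<bar>x\<bar> < s1" using that s1(1) by (simp add: \<delta>_def)
    then have "\<bar>poly p1 x - poly p1 0\<bar> < \<bar>poly p1 0\<bar> / 2" using s1(2) by (simp add: c_def)
    then show ?thesis unfolding c_def by arith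
  qed
  have p1nz: "poly p1 x \<noteq> 0" if "\<bar>x\<bar> \<le> \<delta>" for x using p1c[OF that] cpos by auto
  define f where "f = urabe_f p1 q2"
  define g where "g = urabe_g p0 p1 q0 q1 q2"
  define F where "F = sint f"
  define E where "E = (\<lambda>x. exp (F x))"
  define xi where "xi = (\<lambda>x. g x * E x)"
  have df: "(f has_real_derivative (- (poly (pderiv q2) x + poly (pderiv (pderiv p1)) x) * poly p1 x
        - (- (poly q2 x + poly (pderiv p1) x)) * poly (pderiv p1) x) / (poly p1 x * poly p1 x)) (at x)"
    if "\<bar>x\<bar> \<le> \<delta>" for x
    unfolding f_def urabe_f_def using p1nz[OF that]
    by (intro derivative_eq_intros poly_DERIV) auto
  have contf: "continuous_on {-\<delta>..\<delta>} f"
    by (intro continuous_at_imp_continuous_on ballI) (use df DERIV_isCont in force)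
  have dF: "(F has_real_derivative f x) (at x)" if "\<bar>x\<bar> < \<delta>" for x
    unfolding F_def by (rule sint_deriv[OF contf that])
  have dE: "(E has_real_derivative E x * f x) (at x)" if "\<bar>x\<bar> < \<delta>" for x
    unfolding E_def by (rule DERIV_chain2[OF DERIV_exp dF[OF that]])
  have dg: "(g has_real_derivative 1 - g x * f x) (at x)" if "\<bar>x\<bar> < \<delta>" for x
    unfolding g_def f_def by (rule hg) (use p1nz that in auto)
  have dxi: "(xi has_real_derivative E x) (at x)" if "\<bar>x\<bar> < \<delta>" for x
  proof -
    show ?thesis
      unfolding xi_def by (rule DERIV_cong[OF DERIV_mult[OF dg[OF that] dE[OF that]]]) (simp add: algebra_simps)
  qed
  have Epos: "E x > 0" for x by (simp add: E_def)
  have g0: "g 0 = 0" by (simp add: g_def urabe_g_def h00 hq0)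
  have xi0: "xi 0 = 0" by (simp add: xi_def g0)
  have F0: "F 0 = 0" by (simp add: F_def sint_zero)
  have mono: "xi u < xi v" if "\<bar>u\<bar> < \<delta>" "\<bar>v\<bar> < \<delta>" "u < v" for u v
  proof (rule DERIV_pos_imp_increasing[OF that(3)])
    fix x assume "u \<le> x" "x \<le> v"
    then have "\<bar>x\<bar> < \<delta>" using that by auto
    then show "\<exists>y. DERIV xi x :> y \<and> 0 < y" using dxi Epos by blast
  qed
  have zero: "urabe_zero p0 p1 q0 q1 q2"
  proof -
    define h where "h = (\<lambda>s. g s * exp (2 * F s))"
    define D where "D = (\<lambda>x. (xi x)^2 / 2 - sint h x)"
    have hxi: "h y = xi y * E y" for y by (simp add: h_def xi_def E_def exp_double power2_eq_square)
    have dD: "(D has_real_derivative 0) (at y)" if y: "\<bar>y\<bar> < \<delta>" for y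
    proof -
      define c' where "c' = (\<delta> + \<bar>y\<bar>) / 2"
      have c': "\<bar>y\<bar> < c'" "c' < \<delta>" using y by (auto simp: c'_def)
      have conth: "continuous_on {-c'..c'} h"
      proof (intro continuous_at_imp_continuous_on ballI)
        fix s assume "s \<in> {-c'..c'}"
        then have s: "\<bar>s\<bar> < \<delta>" using c' by auto
        have "isCont g s" using dg[OF s] DERIV_isCont by blast
        moreover have "isCont F s" using dF[OF s] DERIV_isCont by blast
        ultimately show "isCont h s" unfolding h_def by (intro continuous_intros) auto
      qed
      have "(D has_real_derivative (2 * xi y * E y) / 2 - h y) (at y)"
        unfolding D_def using dxi[OF y] sint_deriv[OF conth c'(1)]
        by (auto intro!: derivative_eq_intros simp: power2_eq_square)
      then show ?thesis by (simp add: hxi)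
    qed
    have D0: "D 0 = 0" by (simp add: D_def xi0 sint_zero)
    have Deq: "D x = 0" if "\<bar>x\<bar> < \<delta>" for x
    proof -
      have "D x = D 0"
        by (rule DERIV_isconst3[of "-\<delta>" \<delta>]) (use dD that \<delta>pos in \<open>auto simp: abs_less_iff\<close>)
      then show ?thesis using D0 by simp
    qed
    have Z2: "(g x * exp (F x))^2 / 2 = sint (\<lambda>s. g s * exp (2 * F s)) x" if "\<bar>x\<bar> < \<delta>" for x
      using Deq[OF that] by (simp add: D_def h_def xi_def E_def)
    have Z3: "0 < x * (g x * exp (F x))" if "\<bar>x\<bar> < \<delta>" "x \<noteq> 0" for x
    proof (cases "0 < x")
      case True
      then have "xi 0 < xi x" using mono[of 0 x] that \<delta>pos by auto
      then show ?thesis using True xi0 by (simp add: xi_def E_def)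
    next
      case False
      then have "xi x < xi 0" using mono[of x 0] that \<delta>pos by auto
      then have "xi x < 0" "x < 0" using False that xi0 by auto
      then show ?thesis by (simp add: xi_def E_def mult_neg_neg)
    qed
    show ?thesis
      unfolding urabe_zero_def Let_def f_def[symmetric] g_def[symmetric] F_def[symmetric]
      using Z2 Z3 hid p1nz \<delta>pos by (intro exI[of _ \<delta>]) auto
  qed
  have iso: "isochronous_center (\<lambda>(x,y). (poly p0 x + poly p1 x * y, poly q0 x + poly q1 x * y + poly q2 x * y^2))"
  proof -
    have E0: "E 0 = 1" by (simp add: E_def F0)
    obtain s2 where s2: "s2 > 0" "\<forall>x. \<bar>x\<bar> < s2 \<longrightarrow> \<bar>E x - E 0\<bar> < 1/2"
      using isCont_nbhd[of E "1/2"] dE[of 0] \<delta>pos DERIV_isCont by force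
    obtain s3 where s3: "s3 > 0" "\<forall>x. \<bar>x\<bar> < s3 \<longrightarrow> \<bar>poly p0 x - poly p0 0\<bar> < 1"
      using isCont_nbhd[of "poly p0" 1] by auto
    define d where "d = min \<delta> (min s2 s3) / 2"
    have d: "0 < d" "d < \<delta>" "d < s2" "d < s3" using \<delta>pos s2 s3 by (auto simp: d_def)
    show ?thesis
    proof (rule iso_abstract[where d=d and \<delta>=\<delta> and c=c and f=f and g=g and xi=xi and E=E
          and PA="poly p0" and PB="poly p1" and QA="poly q0" and QB="poly q1" and QC="poly q2"
          and DPA="poly (pderiv p0)" and DPB="poly (pderiv p1)"])
      show "0 < d" "d < \<delta>" "0 < c" using d cpos by auto
      show "\<And>x. \<bar>x\<bar> < \<delta> \<Longrightarrow> (xi has_real_derivative E x) (at x)" by (rule dxi)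
      show "\<And>x. \<bar>x\<bar> < \<delta> \<Longrightarrow> (E has_real_derivative E x * f x) (at x)" by (rule dE)
      show "\<And>x. (poly p0 has_real_derivative poly (pderiv p0) x) (at x)" by (rule poly_DERIV)
      show "\<And>x. (poly p1 has_real_derivative poly (pderiv p1) x) (at x)" by (rule poly_DERIV)
      show "\<And>x. \<bar>x\<bar> < \<delta> \<Longrightarrow> E x > 0" by (rule Epos)
      show "\<And>x. \<bar>x\<bar> < \<delta> \<Longrightarrow> xi x = g x * E x" by (simp add: xi_def)
      show "\<And>x. \<bar>x\<bar> \<le> d \<Longrightarrow> c \<le> \<bar>poly p1 x\<bar>" using p1c d by auto
      show "\<bar>poly p0 x\<bar> \<le> 1" if "\<bar>x\<bar> \<le> d" for x
      proof -
        have "\<bar>x\<bar> < s3" using that d by linarith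
        then show ?thesis using s3(2) h00 by fastforce
      qed
      show "\<And>x. \<bar>x\<bar> \<le> d \<Longrightarrow> 1/2 \<le> E x"
      proof -
        fix x :: real assume "\<bar>x\<bar> \<le> d"
        then have "\<bar>x\<bar> < s2" using d by linarith
        then have "\<bar>E x - 1\<bar> < 1/2" using s2(2) E0 by fastforce
        then show "1/2 \<le> E x" by arith
      qed
      show "xi 0 = 0" "poly p0 0 = 0" by (rule xi0, rule h00)
      fix x z :: real assume x: "\<bar>x\<bar> < \<delta>"
      then have nz: "poly p1 x \<noteq> 0" using p1nz by auto
      show "((- g x - f x * z^2) - poly (pderiv p0) x * z) * poly p1 x - (z - poly p0 x) * (poly (pderiv p1) x * z)
                 = (poly p1 x)^2 * (poly q0 x + poly q1 x * ((z - poly p0 x) / poly p1 x) + poly q2 x * ((z - poly p0 x) / poly p1 x)^2)"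
        unfolding f_def g_def urabe_f_def urabe_g_def
        by (rule alg[OF nz]) (use hid[OF nz] in \<open>simp add: urabe_identity_def\<close>)
    qed
  qed
  show ?thesis using zero iso by blast
qed



lemma urabe_g_form:
  fixes p0 p1 q0 q1 q2 :: "real poly"
  assumes "\<And>x. poly p0 x = -(x^2) * poly p1 x"
  shows "urabe_g p0 p1 q0 q1 q2 = (\<lambda>x. - poly p1 x * (poly q2 x * x^4 + poly q1 x * x^2 + poly q0 x))"
proof
  fix x
  show "urabe_g p0 p1 q0 q1 q2 x = - poly p1 x * (poly q2 x * x^4 + poly q1 x * x^2 + poly q0 x)"
    using assms[of x] by (cases "poly p1 x = 0") (auto simp: urabe_g_def field_simps power2_eq_square power4_eq_xxxx)
qed

lemma g_deriv:
  fixes p1 q0 q1 q2 :: "real poly"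
  assumes nz: "poly p1 x \<noteq> 0"
    and key: "poly p1 x * (poly (pderiv q2) x * x^4 + poly q2 x * (4*x^3) + poly (pderiv q1) x * x^2
                + poly q1 x * (2*x) + poly (pderiv q0) x)
              = poly q2 x * (poly q2 x * x^4 + poly q1 x * x^2 + poly q0 x) - 1"
  shows "((\<lambda>x. - poly p1 x * (poly q2 x * x^4 + poly q1 x * x^2 + poly q0 x)) has_real_derivative
          1 - (- poly p1 x * (poly q2 x * x^4 + poly q1 x * x^2 + poly q0 x)) * urabe_f p1 q2 x) (at x)"
proof -
  have "((\<lambda>x. - poly p1 x * (poly q2 x * x^4 + poly q1 x * x^2 + poly q0 x)) has_real_derivative
     - (poly (pderiv p1) x * (poly q2 x * x^4 + poly q1 x * x^2 + poly q0 x) + poly p1 x *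
       (poly (pderiv q2) x * x^4 + poly q2 x * (4*x^3) + poly (pderiv q1) x * x^2
                + poly q1 x * (2*x) + poly (pderiv q0) x))) (at x)"
    by (auto intro!: derivative_eq_intros simp: algebra_simps)
  moreover
  {
    define W where "W = poly q2 x * x^4 + poly q1 x * x^2 + poly q0 x"
    define W' where "W' = poly (pderiv q2) x * x^4 + poly q2 x * (4*x^3) + poly (pderiv q1) x * x^2
                + poly q1 x * (2*x) + poly (pderiv q0) x"
    have k: "poly p1 x * W' = poly q2 x * W - 1" using key by (simp add: W_def W'_def)
    have gf: "(- poly p1 x * W) * urabe_f p1 q2 x = W * (poly q2 x + poly (pderiv p1) x)"
      using nz by (simp add: urabe_f_def field_simps)
    have "- (poly (pderiv p1) x * W + poly p1 x * W') = 1 - (- poly p1 x * W) * urabe_f p1 q2 x"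
      using k gf by (simp add: algebra_simps)
    then have "- (poly (pderiv p1) x * (poly q2 x * x^4 + poly q1 x * x^2 + poly q0 x) + poly p1 x *
       (poly (pderiv q2) x * x^4 + poly q2 x * (4*x^3) + poly (pderiv q1) x * x^2
                + poly q1 x * (2*x) + poly (pderiv q0) x))
     = 1 - (- poly p1 x * (poly q2 x * x^4 + poly q1 x * x^2 + poly q0 x)) * urabe_f p1 q2 x"
      by (simp only: W_def W'_def)
  }
  ultimately show ?thesis by simp
qed

lemma case1:
  fixes a :: real
  shows "(let V = (\<lambda>(x::real, y::real).
        (- y + a*x*y + a^2*x^2*y + x^2 - a*x^3 - a^2*x^4,
         x + 3*a*y^2 - 2*x*y - a*x^2 + 2*a^2*x*y^2 - 4*a*x^2*y + 2*x^3 - 2*a^2*x^3*y + a*x^4))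
     in isochronous_center V \<and> zero_urabe_system V)"
proof -
  define p0 :: "real poly" where "p0 = [:0, 0, 1, -a, - (a^2) :]"
  define p1 :: "real poly" where "p1 = [:-1, a, (a^2) :]"
  define q0 :: "real poly" where "q0 = [:0, 1, -a, 2, a:]"
  define q1 :: "real poly" where "q1 = [:0, -2, -4*a, -2*(a^2) :]"
  define q2 :: "real poly" where "q2 = [:3*a, 2*(a^2) :]"
  have V: "(\<lambda>(x::real, y::real).
        (- y + a*x*y + a^2*x^2*y + x^2 - a*x^3 - a^2*x^4,
         x + 3*a*y^2 - 2*x*y - a*x^2 + 2*a^2*x*y^2 - 4*a*x^2*y + 2*x^3 - 2*a^2*x^3*y + a*x^4))
     = (\<lambda>(x,y). (poly p0 x + poly p1 x * y, poly q0 x + poly q1 x * y + poly q2 x * y^2))"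
    by (auto simp: fun_eq_iff p0_def p1_def q0_def q1_def q2_def algebra_simps power2_eq_square power3_eq_cube power4_eq_xxxx)
  have p0p1: "\<And>x. poly p0 x = -(x^2) * poly p1 x"
    by (simp add: p0_def p1_def algebra_simps power2_eq_square power3_eq_cube power4_eq_xxxx)
  note g = urabe_g_form[OF p0p1]
  have main: "isochronous_center (\<lambda>(x,y). (poly p0 x + poly p1 x * y, poly q0 x + poly q1 x * y + poly q2 x * y^2))
         \<and> urabe_zero p0 p1 q0 q1 q2"
  proof (rule main_lemma)
    show "poly p0 0 = 0" "poly q0 0 = 0" "poly p1 0 \<noteq> 0" by (simp_all add: p0_def q0_def p1_def)
    fix x assume nz: "poly p1 x \<noteq> 0"
    show "urabe_identity p0 p1 q1 q2 x = 0"
      using nz unfolding urabe_identity_def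
      by (simp add: p0_def p1_def q0_def q1_def q2_def field_simps pderiv_pCons)
    show "(urabe_g p0 p1 q0 q1 q2 has_real_derivative 1 - urabe_g p0 p1 q0 q1 q2 x * urabe_f p1 q2 x) (at x)"
      unfolding g using nz
      by (intro g_deriv nz) (simp add: p1_def q0_def q1_def q2_def pderiv_pCons algebra_simps power2_eq_square power3_eq_cube power4_eq_xxxx)
  qed
  show ?thesis unfolding Let_def V zero_urabe_system_def
    using main by (intro conjI exI[of _ p0] exI[of _ p1] exI[of _ q0] exI[of _ q1] exI[of _ q2]) (auto simp: p0_def p1_def q0_def)
qed
lemma case2:
  fixes a :: real
  shows "(let V = (\<lambda>(x::real, y::real).
        (- y + a*x*y + 3*a^2*x^2*y + x^2 - a*x^3 - 3*a^2*x^4,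
         x + 4*a*y^2 - 2*x*y - 3/2*a*x^2 + 6*a^2*x*y^2 - 6*a*x^2*y + 2*x^3 - 6*a^2*x^3*y + 2*a*x^4))
     in isochronous_center V \<and> zero_urabe_system V)"
proof -
  define p0 :: "real poly" where "p0 = [:0, 0, 1, -a, - 3*(a^2) :]"
  define p1 :: "real poly" where "p1 = [:-1, a, 3*(a^2) :]"
  define q0 :: "real poly" where "q0 = [:0, 1, -3/2*a, 2, 2*a:]"
  define q1 :: "real poly" where "q1 = [:0, -2, -6*a, -6*(a^2) :]"
  define q2 :: "real poly" where "q2 = [:4*a, 6*(a^2) :]"
  have V: "(\<lambda>(x::real, y::real).
        (- y + a*x*y + 3*a^2*x^2*y + x^2 - a*x^3 - 3*a^2*x^4,
         x + 4*a*y^2 - 2*x*y - 3/2*a*x^2 + 6*a^2*x*y^2 - 6*a*x^2*y + 2*x^3 - 6*a^2*x^3*y + 2*a*x^4))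
     = (\<lambda>(x,y). (poly p0 x + poly p1 x * y, poly q0 x + poly q1 x * y + poly q2 x * y^2))"
    by (auto simp: fun_eq_iff p0_def p1_def q0_def q1_def q2_def algebra_simps power2_eq_square power3_eq_cube power4_eq_xxxx)
  have p0p1: "\<And>x. poly p0 x = -(x^2) * poly p1 x"
    by (simp add: p0_def p1_def algebra_simps power2_eq_square power3_eq_cube power4_eq_xxxx)
  note g = urabe_g_form[OF p0p1]
  have main: "isochronous_center (\<lambda>(x,y). (poly p0 x + poly p1 x * y, poly q0 x + poly q1 x * y + poly q2 x * y^2))
         \<and> urabe_zero p0 p1 q0 q1 q2"
  proof (rule main_lemma)
    show "poly p0 0 = 0" "poly q0 0 = 0" "poly p1 0 \<noteq> 0" by (simp_all add: p0_def q0_def p1_def)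
    fix x assume nz: "poly p1 x \<noteq> 0"
    show "urabe_identity p0 p1 q1 q2 x = 0"
      using nz unfolding urabe_identity_def
      by (simp add: p0_def p1_def q0_def q1_def q2_def field_simps pderiv_pCons)
    show "(urabe_g p0 p1 q0 q1 q2 has_real_derivative 1 - urabe_g p0 p1 q0 q1 q2 x * urabe_f p1 q2 x) (at x)"
      unfolding g using nz
      by (intro g_deriv nz) (simp add: p1_def q0_def q1_def q2_def pderiv_pCons algebra_simps power2_eq_square power3_eq_cube power4_eq_xxxx)
  qed
  show ?thesis unfolding Let_def V zero_urabe_system_def
    using main by (intro conjI exI[of _ p0] exI[of _ p1] exI[of _ q0] exI[of _ q1] exI[of _ q2]) (auto simp: p0_def p1_def q0_def)
qed
lemma case3:
  fixes a :: real
  fixes b :: real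
  shows "(let K = a^2 - 3/2*a*b + 1/2*b^2;
         V = (\<lambda>(x::real, y::real).
        (- y + a*x*y + K*x^2*y + x^2 - a*x^3 - K*x^4,
         x + b*y^2 - 2*x*y + (a - b)/2*x^2 + 2*K*x*y^2 + 2*(a - b)*x^2*y + 2*x^3 - 2*K*x^3*y + (b - 2*a)*x^4))
     in isochronous_center V \<and> zero_urabe_system V)"
proof -
  define K where "K = a^2 - 3/2*a*b + 1/2*b^2"
  define p0 :: "real poly" where "p0 = [:0, 0, 1, -a, - K :]"
  define p1 :: "real poly" where "p1 = [:-1, a, K :]"
  define q0 :: "real poly" where "q0 = [:0, 1, (a-b)/2, 2, b - 2*a :]"
  define q1 :: "real poly" where "q1 = [:0, -2, 2*(a-b), -2*K :]"
  define q2 :: "real poly" where "q2 = [:b, 2*K :]"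
  have V: "(\<lambda>(x::real, y::real).
        (- y + a*x*y + K*x^2*y + x^2 - a*x^3 - K*x^4,
         x + b*y^2 - 2*x*y + (a - b)/2*x^2 + 2*K*x*y^2 + 2*(a - b)*x^2*y + 2*x^3 - 2*K*x^3*y + (b - 2*a)*x^4))
     = (\<lambda>(x,y). (poly p0 x + poly p1 x * y, poly q0 x + poly q1 x * y + poly q2 x * y^2))"
    by (auto simp: fun_eq_iff p0_def p1_def q0_def q1_def q2_def algebra_simps power2_eq_square power3_eq_cube power4_eq_xxxx)
  have p0p1: "\<And>x. poly p0 x = -(x^2) * poly p1 x"
    by (simp add: p0_def p1_def algebra_simps power2_eq_square power3_eq_cube power4_eq_xxxx)
  note g = urabe_g_form[OF p0p1]
  have main: "isochronous_center (\<lambda>(x,y). (poly p0 x + poly p1 x * y, poly q0 x + poly q1 x * y + poly q2 x * y^2))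
         \<and> urabe_zero p0 p1 q0 q1 q2"
  proof (rule main_lemma)
    show "poly p0 0 = 0" "poly q0 0 = 0" "poly p1 0 \<noteq> 0" by (simp_all add: p0_def q0_def p1_def)
    fix x assume nz: "poly p1 x \<noteq> 0"
    show "urabe_identity p0 p1 q1 q2 x = 0"
      using nz unfolding urabe_identity_def
      by (simp add: p0_def p1_def q0_def q1_def q2_def field_simps pderiv_pCons)
    show "(urabe_g p0 p1 q0 q1 q2 has_real_derivative 1 - urabe_g p0 p1 q0 q1 q2 x * urabe_f p1 q2 x) (at x)"
      unfolding g using nz
      by (intro g_deriv nz) (simp add: p1_def q0_def q1_def q2_def K_def pderiv_pCons field_simps power2_eq_square power3_eq_cube power4_eq_xxxx)
  qed
  show ?thesis unfolding Let_def K_def[symmetric] V zero_urabe_system_def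
    using main by (intro conjI exI[of _ p0] exI[of _ p1] exI[of _ q0] exI[of _ q1] exI[of _ q2]) (auto simp: p0_def p1_def q0_def)
qed

theorem theorem4p2:
  fixes a b :: real
  shows
   "(let V = (\<lambda>(x::real, y::real).
        (- y + a*x*y + a^2*x^2*y + x^2 - a*x^3 - a^2*x^4,
         x + 3*a*y^2 - 2*x*y - a*x^2 + 2*a^2*x*y^2 - 4*a*x^2*y + 2*x^3 - 2*a^2*x^3*y + a*x^4))
     in isochronous_center V \<and> zero_urabe_system V)
  \<and> (let V = (\<lambda>(x::real, y::real).
        (- y + a*x*y + 3*a^2*x^2*y + x^2 - a*x^3 - 3*a^2*x^4,
         x + 4*a*y^2 - 2*x*y - 3/2*a*x^2 + 6*a^2*x*y^2 - 6*a*x^2*y + 2*x^3 - 6*a^2*x^3*y + 2*a*x^4))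
     in isochronous_center V \<and> zero_urabe_system V)
  \<and> (let K = a^2 - 3/2*a*b + 1/2*b^2;
         V = (\<lambda>(x::real, y::real).
        (- y + a*x*y + K*x^2*y + x^2 - a*x^3 - K*x^4,
         x + b*y^2 - 2*x*y + (a - b)/2*x^2 + 2*K*x*y^2 + 2*(a - b)*x^2*y + 2*x^3 - 2*K*x^3*y + (b - 2*a)*x^4))
     in isochronous_center V \<and> zero_urabe_system V)"
  using case1[of a] case2[of a] case3[of a b] by blast


end
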